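(* Let $k\geq2$. There exist constants $c,C>0$ and $r_0\geq 1$ depending only on $k$ such that the following holds. For $1\leq i\leq k$ let $B_i\subset\mathbb{R}$ be finite, let $g_i$ be a strictly monotone real function and $A_i=g_i(B_i)$. Let $r\geq r_0$ with $r^{1/(k-1)}\leq |B_i+B_i-B_i|$ for all $i$, and let $X_r=\{x\in A_1+\dots+A_k:\ r\leq r_{A_1+\dots+A_k}(x)<2r\}$. Then for each $x\in X_r$ there are at least $cr$ pairs $(P,P')$ of distinct points $P=(b_1,\dots,b_k)$, $P'=(b_1',\dots,b_k')$ in $B_1\times\dots\times B_k$ such that (1) $g_1(b_1)+\dots+g_k(b_k)=x=g_1(b_1')+\dots+g_k(b_k')$, and (2) $n_{B_i}(b_i,b_i')\leq C\,|B_i+B_i-B_i|/r^{1/(k-1)}$ for all $1\leq i\leq k$.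
   Context: $r_{A_1+\dots+A_k}(x)$ is the number of tuples $(a_1,\dots,a_k)\in A_1\times\dots\times A_k$ with $a_1+\dots+a_k=x$. $B+B-B=\{b_1+b_2-b_3:b_j\in B\}$. For $b,b'\in B$, $n_B(b,b')$ denotes the number of elements of $B+B-B$ lying in the interval $(\min(b,b'),\max(b,b')]$. Such pairs $(P,P')$ are called lucky pairs associated with $x$. *)

theory Defs
  imports Complex_Main "HOL-Library.FuncSet"
begin

text \<open>Tuples (a_0,...,a_{k-1}) in A_0 x ... x A_{k-1} are functions in PiE {..<k} A.\<close>

definition sumset :: "nat \<Rightarrow> (nat \<Rightarrow> real set) \<Rightarrow> real set" where
  "sumset k A = {(\<Sum>i<k. a i) | a. a \<in> PiE {..<k} A}"

definition rep_count :: "nat \<Rightarrow> (nat \<Rightarrow> real set) \<Rightarrow> real \<Rightarrow> nat" where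
  "rep_count k A x = card {a \<in> PiE {..<k} A. (\<Sum>i<k. a i) = x}"

definition BBB :: "real set \<Rightarrow> real set" where
  "BBB B = {b1 + b2 - b3 | b1 b2 b3. b1 \<in> B \<and> b2 \<in> B \<and> b3 \<in> B}"

definition n_B :: "real set \<Rightarrow> real \<Rightarrow> real \<Rightarrow> nat" where
  "n_B B b b' = card (BBB B \<inter> {min b b'<..max b b'})"

definition strictly_monotone :: "(real \<Rightarrow> real) \<Rightarrow> bool" where
  "strictly_monotone g \<longleftrightarrow>
     (\<forall>x y. x < y \<longrightarrow> g x < g y) \<or> (\<forall>x y. x < y \<longrightarrow> g y < g x)"

end

theory Submission
  imports Defs
begin

lemma pigeon:
  assumes "finite S"
  shows "card S \<le> card {(P,Q). P\<in>S \<and> Q\<in>S \<and> P\<noteq>Q \<and> f P = f Q} + card (f ` S)"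
proof -
  define rep where "rep v = (SOME Q. Q \<in> S \<and> f Q = v)" for v
  define R where "R = rep ` f ` S"
  have rep: "rep (f P) \<in> S \<and> f (rep (f P)) = f P" if "P \<in> S" for P
    unfolding rep_def by (rule someI[of _ P]) (use that in auto)
  have cR: "card R \<le> card (f ` S)" unfolding R_def by (rule card_image_le) (use assms in auto)
  have RS: "R \<subseteq> S" unfolding R_def using rep by auto
  let ?T = "{(P,Q). P\<in>S \<and> Q\<in>S \<and> P\<noteq>Q \<and> f P = f Q}"
  have fT: "finite ?T" by (rule finite_subset[of _ "S \<times> S"]) (use assms in auto)
  have inj: "inj_on (\<lambda>P. (P, rep (f P))) (S - R)" by (auto intro: inj_onI)
  have sub: "(\<lambda>P. (P, rep (f P))) ` (S - R) \<subseteq> ?T"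
  proof
    fix z assume "z \<in> (\<lambda>P. (P, rep (f P))) ` (S - R)"
    then obtain P where P: "P \<in> S" "P \<notin> R" "z = (P, rep (f P))" by auto
    have "rep (f P) \<in> R" unfolding R_def using P by auto
    then show "z \<in> ?T" using P rep[OF P(1)] by auto
  qed
  have "card (S - R) \<le> card ?T"
    using card_inj_on_le[OF inj sub fT] .
  moreover have "card S = card (S - R) + card R"
    using card_Diff_subset[OF finite_subset[OF RS assms] RS] card_mono[OF assms RS] by simp
  ultimately show ?thesis using cR by linarith
qed

lemma div_eq_diff:
  fixes a b M q :: nat
  assumes "a \<le> b" "q > 0" "a * M div q = b * M div q"
  shows "(b - a) * M < q"
proof -
  have 1: "b * M < (b * M div q + 1) * q" using assms(2)
    by (metis add.commute div_mult_mod_eq mod_less_divisor nat_add_left_cancel_less distrib_right mult_1)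
  have 2: "(a * M div q) * q \<le> a * M" by (metis div_mult_mod_eq le_add1)
  have "(b - a) * M = b * M - a * M" by (simp add: diff_mult_distrib)
  moreover have "b * M < (a * M div q) * q + q" using 1 assms(3) by (simp add: algebra_simps)
  moreover have "\<And>bb X aa. bb < X + q \<Longrightarrow> X \<le> aa \<Longrightarrow> 0 < q \<Longrightarrow> bb - aa < (q::nat)" by arith
  ultimately show ?thesis using 2 assms(2) by metis
qed

lemma finite_BBB: "finite B \<Longrightarrow> finite (BBB B)"
proof -
  assume "finite B"
  have "BBB B = (\<lambda>(a,b,c). a+b-c) ` (B\<times>B\<times>B)" unfolding BBB_def by force
  then show ?thesis using \<open>finite B\<close> by simp
qed

lemma card_labels:
  "card {u \<in> PiE {..<k} (\<lambda>_. {..<M::nat}). \<exists>j<k. u j = 0} \<le> k * M ^ (k - 1)"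
proof -
  have eq: "{u \<in> PiE {..<k} (\<lambda>_. {..<M::nat}). \<exists>j<k. u j = 0} \<subseteq>
     (\<Union>j<k. PiE {..<k} (\<lambda>i. if i = j then {0} else {..<M}))"
    by (auto simp: PiE_iff)
  have c: "card (PiE {..<k} (\<lambda>i. if i = j then {0} else {..<M})) = M ^ (k - 1)" if "j < k" for j
  proof -
    have "card (PiE {..<k} (\<lambda>i. if i = j then {0} else {..<M})) = (\<Prod>i<k. if i = j then 1 else M)"
      by (simp add: card_PiE if_distrib cong: if_cong)
    also have "\<dots> = (\<Prod>i\<in>{..<k} - {j}. M)"
      using that by (subst prod.remove[of _ j]) (auto intro: prod.cong)
    also have "\<dots> = M ^ (k - 1)" using that by simp
    finally show ?thesis .
  qed
  have "card {u \<in> PiE {..<k} (\<lambda>_. {..<M::nat}). \<exists>j<k. u j = 0}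
      \<le> card (\<Union>j<k. PiE {..<k} (\<lambda>i. if i = j then {0} else {..<M}))"
    by (rule card_mono[OF _ eq]) (auto simp: finite_PiE)
  also have "\<dots> \<le> (\<Sum>j<k. card (PiE {..<k} (\<lambda>i. if i = j then {0} else {..<M})))"
    by (rule card_UN_le) simp
  also have "\<dots> = k * M ^ (k - 1)" using c by simp
  finally show ?thesis .
qed

lemma rep_le:
  assumes "finite {P \<in> PiE {..<k} B. (\<Sum>i<k. g i (P i)) = x}"
  shows "rep_count k (\<lambda>i. g i ` B i) x \<le> card {P \<in> PiE {..<k} B. (\<Sum>i<k. g i (P i)) = x}"
    (is "_ \<le> card ?S")
proof -
  note fin = assms
  let ?h = "\<lambda>P. restrict (\<lambda>i. g i (P i)) {..<k}"
  have "{a \<in> PiE {..<k} (\<lambda>i. g i ` B i). (\<Sum>i<k. a i) = x} \<subseteq> ?h ` ?S"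
  proof
    fix a assume a: "a \<in> {a \<in> PiE {..<k} (\<lambda>i. g i ` B i). (\<Sum>i<k. a i) = x}"
    then have "\<forall>i<k. \<exists>b\<in>B i. a i = g i b" by (auto simp: PiE_iff)
    define f where "f i = (SOME b. b \<in> B i \<and> a i = g i b)" for i
    have f: "\<forall>i<k. f i \<in> B i \<and> a i = g i (f i)"
    proof (intro allI impI)
      fix i assume "i < k"
      with \<open>\<forall>i<k. \<exists>b\<in>B i. a i = g i b\<close> have "\<exists>b. b \<in> B i \<and> a i = g i b" by blast
      then show "f i \<in> B i \<and> a i = g i (f i)" unfolding f_def by (rule someI_ex)
    qed
    let ?P = "restrict f {..<k}"
    have "?P \<in> PiE {..<k} B" using f by simp
    moreover have "(\<Sum>i<k. g i (?P i)) = (\<Sum>i<k. a i)" using f by (intro sum.cong) auto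
    ultimately have Pin: "?P \<in> ?S" using a by simp
    have heq: "?h ?P = a"
    proof
      fix i show "?h ?P i = a i"
      proof (cases "i < k")
        case True then show ?thesis using f by simp
      next
        case False then show ?thesis using a PiE_arb[of a "{..<k}" "\<lambda>i. g i ` B i" i] by simp
      qed
    qed
    show "a \<in> ?h ` ?S" by (rule image_eqI[where f="?h" and x="?P", OF heq[symmetric] Pin])
  qed
  then have "rep_count k (\<lambda>i. g i ` B i) x \<le> card (?h ` ?S)"
    unfolding rep_count_def by (intro card_mono) (use fin in auto)
  also have "\<dots> \<le> card ?S" using fin by (rule card_image_le)
  finally show ?thesis .
qed

lemma box_count:
  fixes B :: "nat \<Rightarrow> real set" and g :: "nat \<Rightarrow> real \<Rightarrow> real" and M :: nat
  assumes k: "k \<ge> 1" and fin: "\<forall>i<k. finite (B i)" and mono: "\<forall>i<k. strictly_monotone (g i)"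
    and M: "M > 0"
  shows "card {P \<in> PiE {..<k} B. (\<Sum>i<k. g i (P i)) = x} \<le>
     card {(P, P'). P \<in> PiE {..<k} B \<and> P' \<in> PiE {..<k} B \<and> P \<noteq> P' \<and>
            (\<Sum>i<k. g i (P i)) = x \<and> (\<Sum>i<k. g i (P' i)) = x \<and>
            (\<forall>i<k. n_B (B i) (P i) (P' i) * M < card (BBB (B i)) + 1)} + k * M ^ (k - 1)"
proof -
  define D where "D i = BBB (B i)" for i
  define m where "m i = card (D i)" for i
  define rk where "rk i y = card {d \<in> D i. d \<le> y}" for i y
  define bt where "bt i y = rk i y * M div (m i + 1)" for i y
  define inc where "inc i = (\<forall>x y. x < y \<longrightarrow> g i x < g i y)" for i
  define gm where "gm i y = (if inc i then bt i y else M - 1 - bt i y)" for i y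
  define Gm where "Gm P = (\<lambda>i\<in>{..<k}. gm i (P i))" for P :: "nat \<Rightarrow> real"
  define L where "L v = (\<lambda>i\<in>{..<k}. v i - Min (v ` {..<k}))" for v :: "nat \<Rightarrow> nat"
  define S where "S = {P \<in> PiE {..<k} B. (\<Sum>i<k. g i (P i)) = x}"
  have finD: "finite (D i)" if "i < k" for i using fin that finite_BBB unfolding D_def by blast
  have rk_mono: "rk i y \<le> rk i y'" if "i < k" "y \<le> y'" for i y y'
    unfolding rk_def using that finD by (intro card_mono) auto
  have rk_le: "rk i y \<le> m i" if "i < k" for i y
    unfolding rk_def m_def using that finD by (intro card_mono) auto
  have bt_lt: "bt i y < M" if "i < k" for i y
  proof -
    have "rk i y * M \<le> m i * M" using rk_le[OF that, of y] by (rule mult_le_mono1)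
    also have "\<dots> < M * (m i + 1)" using M by simp
    finally have "rk i y * M < M * (m i + 1)" .
    then show ?thesis unfolding bt_def by (rule less_mult_imp_div_less)
  qed
  have bt_mono: "bt i y \<le> bt i y'" if "i < k" "y \<le> y'" for i y y'
    unfolding bt_def using rk_mono[OF that] by (intro div_le_mono mult_le_mono1)
  have key: "g i y < g i y'" if "i < k" "gm i y < gm i y'" for i y y'
  proof (cases "inc i")
    case True
    then have "bt i y < bt i y'" using that unfolding gm_def by simp
    then have "y < y'" using bt_mono[OF that(1), of y' y] by linarith
    then show ?thesis using True unfolding inc_def by blast
  next
    case False
    then have dec: "\<forall>x y. x < y \<longrightarrow> g i y < g i x" using mono that(1) unfolding strictly_monotone_def inc_def by blast
    have "bt i y' < bt i y" using False that bt_lt[OF that(1), of y] bt_lt[OF that(1), of y'] unfolding gm_def by simp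
    then have "y' < y" using bt_mono[OF that(1), of y y'] by linarith
    then show ?thesis using dec by blast
  qed
  have same: "bt i y = bt i y'" if "i < k" "gm i y = gm i y'" for i y y'
    using that bt_lt[OF that(1), of y] bt_lt[OF that(1), of y'] unfolding gm_def by (auto split: if_splits)
  have nb1: "n_B (B i) y y' * M < m i + 1" if "i < k" "bt i y = bt i y'" "y \<le> y'" for i y y'
  proof -
    have eq: "D i \<inter> {y<..y'} = {d \<in> D i. d \<le> y'} - {d \<in> D i. d \<le> y}" using that by auto
    have "n_B (B i) y y' = card (D i \<inter> {y<..y'})" unfolding n_B_def D_def using that(3)
      by (simp add: min_def max_def)
    also have "\<dots> = card ({d \<in> D i. d \<le> y'} - {d \<in> D i. d \<le> y})" by (simp only: eq)
    also have "\<dots> = rk i y' - rk i y" unfolding rk_def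
      by (rule card_Diff_subset) (use finD[OF that(1)] that(3) in auto)
    finally have "n_B (B i) y y' = rk i y' - rk i y" .
    moreover have "(rk i y' - rk i y) * M < m i + 1"
      using div_eq_diff[of "rk i y" "rk i y'" "m i + 1" M] that rk_mono[OF that(1,3)] unfolding bt_def by simp
    ultimately show ?thesis by simp
  qed
  have nb: "n_B (B i) y y' * M < m i + 1" if "i < k" "gm i y = gm i y'" for i y y'
  proof (cases "y \<le> y'")
    case True then show ?thesis using nb1 same that by blast
  next
    case False
    have "n_B (B i) y y' = n_B (B i) y' y" unfolding n_B_def by (simp add: min.commute max.commute)
    then show ?thesis using nb1[of i y' y] same[OF that] that False by simp
  qed
  have finS: "finite S" unfolding S_def
    by (rule finite_subset[of _ "PiE {..<k} B"]) (use fin in \<open>auto intro!: finite_PiE\<close>)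
  have noless: "\<not> (\<forall>i<k. Gm P i < Gm Q i)" if "P \<in> S" "Q \<in> S" for P Q
  proof
    assume "\<forall>i<k. Gm P i < Gm Q i"
    then have "\<forall>i<k. g i (P i) < g i (Q i)" using key unfolding Gm_def by simp
    then have "(\<Sum>i<k. g i (P i)) < (\<Sum>i<k. g i (Q i))" using k
      by (intro sum_strict_mono) (auto simp: lessThan_empty_iff)
    then show False using that unfolding S_def by simp
  qed
  have injL: "inj_on L (Gm ` S)"
  proof (rule inj_onI)
    fix v w assume v: "v \<in> Gm ` S" and w: "w \<in> Gm ` S" and eq: "L v = L w"
    obtain P where P: "P \<in> S" "v = Gm P" using v by auto
    obtain Q where Q: "Q \<in> S" "w = Gm Q" using w by auto
    define a where "a = Min (v ` {..<k})"
    define b where "b = Min (w ` {..<k})"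
    have ne: "{..<k} \<noteq> {}" using k by (auto simp: lessThan_empty_iff)
    have va: "a \<le> v i" if "i < k" for i unfolding a_def using that by simp
    have wb: "b \<le> w i" if "i < k" for i unfolding b_def using that by simp
    have e: "v i - a = w i - b" if "i < k" for i
      using fun_cong[OF eq, of i] that unfolding L_def a_def b_def by simp
    consider "a = b" | "a < b" | "b < a" by linarith
    then show "v = w"
    proof cases
      case 1
      have "v i = w i" for i
      proof (cases "i < k")
        case True then show ?thesis using e[OF True] va[OF True] wb[OF True] 1 by simp
      next
        case False then show ?thesis using P Q unfolding Gm_def by simp
      qed
      then show ?thesis by blast
    next
      case 2
      have "\<forall>i<k. Gm P i < Gm Q i"
      proof (intro allI impI)
        fix i assume "i < k"
        then show "Gm P i < Gm Q i" using e[of i] va[of i] wb[of i] 2 P Q by simp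
      qed
      then show ?thesis using noless P Q by blast
    next
      case 3
      have "\<forall>i<k. Gm Q i < Gm P i"
      proof (intro allI impI)
        fix i assume "i < k"
        then show "Gm Q i < Gm P i" using e[of i] va[of i] wb[of i] 3 P Q by simp
      qed
      then show ?thesis using noless P Q by blast
    qed
  qed
  have Lsub: "L ` Gm ` S \<subseteq> {u \<in> PiE {..<k} (\<lambda>_. {..<M}). \<exists>j<k. u j = 0}"
  proof
    fix u assume "u \<in> L ` Gm ` S"
    then obtain P where P: "P \<in> S" "u = L (Gm P)" by auto
    have ne: "{..<k} \<noteq> {}" using k by (auto simp: lessThan_empty_iff)
    have "Min (Gm P ` {..<k}) \<in> Gm P ` {..<k}" using ne by (intro Min_in) auto
    then obtain j where j: "j < k" "Gm P j = Min (Gm P ` {..<k})" by auto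
    have lt: "Gm P i < M" if "i < k" for i
      using that bt_lt[OF that, of "P i"] M unfolding Gm_def gm_def by auto
    have "u \<in> PiE {..<k} (\<lambda>_. {..<M})" unfolding P(2) L_def using lt
      by (auto simp: PiE_iff) (meson le_less_trans diff_le_self lt)
    moreover have "u j = 0" unfolding P(2) L_def using j by simp
    ultimately show "u \<in> {u \<in> PiE {..<k} (\<lambda>_. {..<M}). \<exists>j<k. u j = 0}" using j by auto
  qed
  have "card (Gm ` S) = card (L ` Gm ` S)" using card_image[OF injL] by simp
  also have "\<dots> \<le> card {u \<in> PiE {..<k} (\<lambda>_. {..<M}). \<exists>j<k. u j = 0}"
    by (rule card_mono[OF _ Lsub]) (rule finite_subset[of _ "PiE {..<k} (\<lambda>_. {..<M})"], auto intro: finite_PiE)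
  also have "\<dots> \<le> k * M ^ (k - 1)" by (rule card_labels)
  finally have cG: "card (Gm ` S) \<le> k * M ^ (k - 1)" .
  let ?T = "{(P, P'). P \<in> PiE {..<k} B \<and> P' \<in> PiE {..<k} B \<and> P \<noteq> P' \<and>
            (\<Sum>i<k. g i (P i)) = x \<and> (\<Sum>i<k. g i (P' i)) = x \<and>
            (\<forall>i<k. n_B (B i) (P i) (P' i) * M < card (BBB (B i)) + 1)}"
  have T0: "{(P,Q). P\<in>S \<and> Q\<in>S \<and> P\<noteq>Q \<and> Gm P = Gm Q} \<subseteq> ?T"
  proof
    fix z assume "z \<in> {(P,Q). P\<in>S \<and> Q\<in>S \<and> P\<noteq>Q \<and> Gm P = Gm Q}"
    then obtain P Q where z: "z = (P, Q)" and PQ: "P \<in> S" "Q \<in> S" "P \<noteq> Q" "Gm P = Gm Q" by blast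
    have "\<forall>i<k. n_B (B i) (P i) (Q i) * M < card (BBB (B i)) + 1"
    proof (intro allI impI)
      fix i assume i: "i < k"
      have "gm i (P i) = gm i (Q i)" using fun_cong[OF PQ(4), of i] i unfolding Gm_def by simp
      then show "n_B (B i) (P i) (Q i) * M < card (BBB (B i)) + 1"
        using nb[OF i] unfolding m_def D_def by blast
    qed
    then show "z \<in> ?T" using PQ z unfolding S_def by simp
  qed
  have finT: "finite ?T"
    by (rule finite_subset[of _ "PiE {..<k} B \<times> PiE {..<k} B"]) (use fin in \<open>auto intro!: finite_PiE\<close>)
  have "card S \<le> card {(P,Q). P\<in>S \<and> Q\<in>S \<and> P\<noteq>Q \<and> Gm P = Gm Q} + card (Gm ` S)"
    by (rule pigeon[OF finS])
  also have "\<dots> \<le> card ?T + k * M ^ (k - 1)"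
    using card_mono[OF finT T0] cG by linarith
  finally show ?thesis unfolding S_def .
qed

lemma nb_real:
  fixes n m M k :: nat and \<rho> :: real
  assumes "n * M < m + 1" "m \<ge> 1" "real M \<ge> \<rho> / (4 * k)" "\<rho> > 0" "k > 0"
  shows "real n \<le> real (8 * k) * real m / \<rho>"
proof -
  have "real n * real M < 2 * real m" using assms(1,2)
    by (metis (mono_tags) of_nat_1 of_nat_add of_nat_le_iff of_nat_less_iff of_nat_mult add_le_mono le_less_trans mult_2 order.refl less_le_trans)
  moreover have "real n * (\<rho> / (4 * k)) \<le> real n * real M" using assms(3) by (intro mult_left_mono) auto
  ultimately have "real n * \<rho> / (4 * k) < 2 * real m" by simp
  then have "real n * \<rho> < 8 * k * real m" using assms(5) by (simp add: field_simps)
  then show ?thesis using assms(4) by (simp add: field_simps)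
qed

theorem proposition3p2:
  fixes k :: nat
  assumes "k \<ge> 2"
  shows "\<exists>c C r0 :: real. c > 0 \<and> C > 0 \<and> r0 \<ge> 1 \<and>
    (\<forall>(B :: nat \<Rightarrow> real set) (g :: nat \<Rightarrow> real \<Rightarrow> real) (r :: real) (x :: real).
       (\<forall>i<k. finite (B i) \<and> strictly_monotone (g i)) \<longrightarrow>
       r \<ge> r0 \<longrightarrow>
       (\<forall>i<k. r powr (1 / (real k - 1)) \<le> real (card (BBB (B i)))) \<longrightarrow>
       x \<in> sumset k (\<lambda>i. g i ` B i) \<longrightarrow>
       r \<le> real (rep_count k (\<lambda>i. g i ` B i) x) \<longrightarrow>
       real (rep_count k (\<lambda>i. g i ` B i) x) < 2 * r \<longrightarrow>
       c * r \<le> real (card {(P, P'). P \<in> PiE {..<k} B \<and> P' \<in> PiE {..<k} B \<and> P \<noteq> P' \<and>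
            (\<Sum>i<k. g i (P i)) = x \<and> (\<Sum>i<k. g i (P' i)) = x \<and>
            (\<forall>i<k. real (n_B (B i) (P i) (P' i))
                     \<le> C * real (card (BBB (B i))) / r powr (1 / (real k - 1)))}))"
proof -
  have k1: "k \<ge> 1" "k > 0" using assms by auto
  have km: "real k - 1 > 0" using assms by simp
  define r0 :: real where "r0 = (2 * real k) ^ (k - 1)"
  have r0_ge: "r0 \<ge> 1" unfolding r0_def using k1 by (intro one_le_power) simp
  define e where "e = 1 / (real k - 1)"
  have rk: "real (k - 1) = real k - 1" using k1 by (simp add: of_nat_diff)
  have pw: "t ^ (k - 1) = t powr (real k - 1)" if "t > 0" for t :: real
    using powr_realpow[OF that, of "k - 1"] rk by simp
  have r0e: "r0 powr e = 2 * real k"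
  proof -
    have "r0 powr e = ((2 * real k) powr (real k - 1)) powr e" unfolding r0_def using k1 pw[of "2 * real k"] by simp
    also have "\<dots> = 2 * real k" unfolding e_def using km k1 by (simp add: powr_powr)
    finally show ?thesis .
  qed
  show ?thesis
  proof (rule exI[of _ "1/2"], rule exI[of _ "real (8 * k)"], rule exI[of _ r0], intro conjI allI impI)
    show "(0::real) < 1/2" by simp
    show "0 < real (8 * k)" using k1 by simp
    show "1 \<le> r0" by (rule r0_ge)
    fix B :: "nat \<Rightarrow> real set" and g :: "nat \<Rightarrow> real \<Rightarrow> real" and r x :: real
    assume H: "\<forall>i<k. finite (B i) \<and> strictly_monotone (g i)" and rr0: "r \<ge> r0"
      and Hc: "\<forall>i<k. r powr (1 / (real k - 1)) \<le> real (card (BBB (B i)))"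
      and xin: "x \<in> sumset k (\<lambda>i. g i ` B i)"
      and rl: "r \<le> real (rep_count k (\<lambda>i. g i ` B i) x)"
      and ru: "real (rep_count k (\<lambda>i. g i ` B i) x) < 2 * r"
    define \<rho> where "\<rho> = r powr e"
    have rpos: "r > 0" using rr0 r0_ge by simp
    have rho_ge: "\<rho> \<ge> 2 * real k" unfolding \<rho>_def using r0e rr0 r0_ge
      by (metis powr_mono2 e_def km less_eq_real_def zero_le_divide_1_iff order.trans zero_le_one)
    have rho_pos: "\<rho> > 0" using rho_ge k1 by simp
    have rho_pow: "\<rho> ^ (k - 1) = r"
    proof -
      have "\<rho> ^ (k - 1) = (r powr e) powr (real k - 1)" using pw[OF rho_pos] unfolding \<rho>_def by simp
      also have "\<dots> = r" unfolding e_def using km rpos by (simp add: powr_powr)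
      finally show ?thesis .
    qed
    define z where "z = \<rho> / (2 * real k)"
    have z1: "z \<ge> 1" unfolding z_def using rho_ge k1 by simp
    define M where "M = nat \<lfloor>z\<rfloor>"
    have M1: "M \<ge> 1" unfolding M_def using z1 by linarith
    have Mz: "real M \<le> z" unfolding M_def using z1 by linarith
    have f1: "real_of_int \<lfloor>z\<rfloor> \<ge> 1" using z1 by simp
    have f2: "z - 1 < real_of_int \<lfloor>z\<rfloor>" by linarith
    have f3: "real M = real_of_int \<lfloor>z\<rfloor>" unfolding M_def using f1 by simp
    have Mz2: "real M \<ge> z / 2" using f1 f2 f3 by linarith
    have MR: "real M \<ge> \<rho> / (4 * real k)" using Mz2 unfolding z_def by (simp add: field_simps)
    have "real M ^ (k - 1) \<le> z ^ (k - 1)" using Mz by (intro power_mono) auto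
    also have "\<dots> = r / (2 * real k) ^ (k - 1)" unfolding z_def using rho_pow by (simp add: power_divide)
    also have "\<dots> \<le> r / (2 * real k)"
    proof -
      have "(2 * real k) ^ 1 \<le> (2 * real k) ^ (k - 1)" using k1 assms by (intro power_increasing) auto
      then show ?thesis using rpos k1 by (intro divide_left_mono) auto
    qed
    finally have "real k * real M ^ (k - 1) \<le> real k * (r / (2 * real k))" using k1 by (intro mult_left_mono) auto
    then have kM: "real (k * M ^ (k - 1)) \<le> r / 2" using k1 by simp
    define S where "S = {P \<in> PiE {..<k} B. (\<Sum>i<k. g i (P i)) = x}"
    have finS: "finite S" unfolding S_def
      by (rule finite_subset[of _ "PiE {..<k} B"]) (use H in \<open>auto intro!: finite_PiE\<close>)
    have "rep_count k (\<lambda>i. g i ` B i) x \<le> card S" unfolding S_def by (rule rep_le) (use finS S_def in simp)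
    then have cS: "real (card S) \<ge> r" using rl by linarith
    let ?T = "{(P, P'). P \<in> PiE {..<k} B \<and> P' \<in> PiE {..<k} B \<and> P \<noteq> P' \<and>
            (\<Sum>i<k. g i (P i)) = x \<and> (\<Sum>i<k. g i (P' i)) = x \<and>
            (\<forall>i<k. n_B (B i) (P i) (P' i) * M < card (BBB (B i)) + 1)}"
    let ?U = "{(P, P'). P \<in> PiE {..<k} B \<and> P' \<in> PiE {..<k} B \<and> P \<noteq> P' \<and>
            (\<Sum>i<k. g i (P i)) = x \<and> (\<Sum>i<k. g i (P' i)) = x \<and>
            (\<forall>i<k. real (n_B (B i) (P i) (P' i))
                     \<le> real (8 * k) * real (card (BBB (B i))) / r powr (1 / (real k - 1)))}"
    have "card S \<le> card ?T + k * M ^ (k - 1)" unfolding S_def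
      by (rule box_count) (use k1 H M1 in auto)
    then have cT: "real (card ?T) \<ge> r / 2" using cS kM by linarith
    have TU: "?T \<subseteq> ?U"
    proof
      fix z assume "z \<in> ?T"
      then obtain P Q where z: "z = (P, Q)" and PQ: "P \<in> PiE {..<k} B" "Q \<in> PiE {..<k} B" "P \<noteq> Q"
        "(\<Sum>i<k. g i (P i)) = x" "(\<Sum>i<k. g i (Q i)) = x"
        "\<forall>i<k. n_B (B i) (P i) (Q i) * M < card (BBB (B i)) + 1" by blast
      have "\<forall>i<k. real (n_B (B i) (P i) (Q i))
                     \<le> real (8 * k) * real (card (BBB (B i))) / r powr (1 / (real k - 1))"
      proof (intro allI impI)
        fix i assume i: "i < k"
        have m1: "card (BBB (B i)) \<ge> 1" using Hc i rho_ge k1 unfolding \<rho>_def e_def by fastforce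
        show "real (n_B (B i) (P i) (Q i)) \<le> real (8 * k) * real (card (BBB (B i))) / r powr (1 / (real k - 1))"
          using nb_real[of "n_B (B i) (P i) (Q i)" M "card (BBB (B i))" \<rho> k] PQ(6) i m1 MR rho_pos k1
          unfolding \<rho>_def e_def by simp
      qed
      then show "z \<in> ?U" using z PQ by simp
    qed
    have finU: "finite ?U"
      by (rule finite_subset[of _ "PiE {..<k} B \<times> PiE {..<k} B"]) (use H in \<open>auto intro!: finite_PiE\<close>)
    have "card ?T \<le> card ?U" by (rule card_mono[OF finU TU])
    then show "1/2 * r \<le> real (card ?U)" using cT by linarith
  qed
qed

end
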